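(* Fix a finite alphabet $\{1,\ldots,S\}$ and a probability distribution $Q=(q_1,\ldots,q_S)$. For a nonnegative vector $R=(r_1,\ldots,r_S)$ and $\hat A\subseteq\{1,\ldots,S\}$ let $\ell(\hat A;R,Q)=\frac14\sum_i|r_i-q_i|-\frac12(R(\hat A)-Q(\hat A))$. Under the Poisson model, the counts $n\hat r_i\sim\mathsf{Poi}(nr_i)$, $1\le i\le S$, are mutually independent and a decision rule $\hat A$ is a function of these counts and $Q$. Let $\mathcal{D}_0(S,\epsilon)=\{(p_1,\ldots,p_S):p_i\ge0,\ |\sum_ip_i-1|<\epsilon\}$, define the Poissonized minimax regret $R_P(S,n,Q,\epsilon)=\inf_{\hat A}\sup_{R\in\mathcal{D}_0(S,\epsilon)}\mathbb{E}_R[\ell(\hat A;R,Q)]$ and, for a prior $\mu$ on nonnegative vectors in $\mathbb{R}^S$, the Bayes regret $R_B(S,n,Q,\mu)=\inf_{\hat A}\int\mathbb{E}_R[\ell(\hat A;R,Q)]\,\mu(dR)$, both under the Poisson model. If there exists a constant $C>1$ such that $\mu\{P:\sum_{i=1}^S p_i\le C\}=1$, then $$R_P(S,n,Q,\epsilon)\ge R_B(S,n,Q,\mu)-C\,\mu\big((\mathcal{D}_0(S,\epsilon))^c\big).$$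
   Context: $\mathsf{Poi}(\lambda)$ is the Poisson distribution with mean $\lambda$; $R(\hat A)=\sum_{i\in\hat A}r_i$. *)

theory Defs
  imports "HOL-Probability.Probability"
begin

text \<open>Alphabet: a finite type 'a (so S = CARD('a)). Vectors are functions 'a \<Rightarrow> real.\<close>

definition Poi :: "real \<Rightarrow> nat pmf" where
  "Poi lam = (if 0 < lam then poisson_pmf lam else return_pmf 0)"

definition loss :: "'a::finite set \<Rightarrow> ('a \<Rightarrow> real) \<Rightarrow> ('a \<Rightarrow> real) \<Rightarrow> real" where
  "loss A R Q = (1/4) * (\<Sum>i\<in>UNIV. \<bar>R i - Q i\<bar>) - (1/2) * ((\<Sum>i\<in>A. R i) - (\<Sum>i\<in>A. Q i))"

text \<open>Poisson model: the vector of counts (n \<hat>r_i)_i, independent Poi(n r_i).\<close>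
definition counts_pmf :: "nat \<Rightarrow> ('a::finite \<Rightarrow> real) \<Rightarrow> ('a \<Rightarrow> nat) pmf" where
  "counts_pmf n R = Pi_pmf UNIV 0 (\<lambda>i. Poi (real n * R i))"

definition exp_loss ::
  "nat \<Rightarrow> ('a::finite \<Rightarrow> real) \<Rightarrow> (('a \<Rightarrow> nat) \<Rightarrow> 'a set) \<Rightarrow> ('a \<Rightarrow> real) \<Rightarrow> real" where
  "exp_loss n Q Ahat R = measure_pmf.expectation (counts_pmf n R) (\<lambda>k. loss (Ahat k) R Q)"

definition D0 :: "real \<Rightarrow> ('a::finite \<Rightarrow> real) set" where
  "D0 eps = {P. (\<forall>i. 0 \<le> P i) \<and> \<bar>(\<Sum>i\<in>UNIV. P i) - 1\<bar> < eps}"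

definition R_P :: "nat \<Rightarrow> ('a::finite \<Rightarrow> real) \<Rightarrow> real \<Rightarrow> ereal" where
  "R_P n Q eps = (INF Ahat. SUP R\<in>D0 eps. ereal (exp_loss n Q Ahat R))"

definition R_B :: "nat \<Rightarrow> ('a::finite \<Rightarrow> real) \<Rightarrow> ('a \<Rightarrow> real) measure \<Rightarrow> ereal" where
  "R_B n Q mu = (INF Ahat. ereal (\<integral>R. exp_loss n Q Ahat R \<partial>mu))"

end

theory Submission
  imports Defs
begin

lemma D0_borel: "D0 eps \<in> sets (borel :: ('a::finite \<Rightarrow> real) measure)"
proof -
  have e: "D0 eps = (\<Inter>i. {P::'a\<Rightarrow>real. 0 \<le> P i}) \<inter> {P. \<bar>(\<Sum>i\<in>UNIV. P i) - 1\<bar> < eps}"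
    unfolding D0_def by auto
  have c: "closed {P::'a\<Rightarrow>real. 0 \<le> P i}" for i
    by (rule closed_Collect_le) (auto intro!: continuous_intros)
  have o: "open {P::'a\<Rightarrow>real. \<bar>(\<Sum>i\<in>UNIV. P i) - 1\<bar> < eps}"
    by (rule open_Collect_less) (auto intro!: continuous_intros)
  show ?thesis unfolding e
    using c o by (intro sets.Int borel_closed closed_INT borel_open) auto
qed

lemma loss_upper:
  fixes R Q :: "'a::finite \<Rightarrow> real"
  assumes "\<forall>i. 0 \<le> Q i" "(\<Sum>i\<in>UNIV. Q i) = 1" "\<forall>i. 0 \<le> R i" "(\<Sum>i\<in>UNIV. R i) \<le> C"
  shows "loss A R Q \<le> (C + 1) / 4 + 1 / 2"
proof -
  have "(\<Sum>i\<in>UNIV. \<bar>R i - Q i\<bar>) \<le> (\<Sum>i\<in>UNIV. R i + Q i)"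
    using assms by (intro sum_mono) (auto simp: abs_le_iff)
  also have "\<dots> \<le> C + 1" using assms by (simp add: sum.distrib)
  finally have 1: "(\<Sum>i\<in>UNIV. \<bar>R i - Q i\<bar>) \<le> C + 1" .
  have 2: "0 \<le> (\<Sum>i\<in>A. R i)" using assms by (intro sum_nonneg) auto
  have 3: "(\<Sum>i\<in>A. Q i) \<le> 1" using assms sum_mono2[of UNIV A Q] by auto
  have key: "x \<le> C+1 \<Longrightarrow> 0 \<le> a \<Longrightarrow> b \<le> 1 \<Longrightarrow> (1/4::real)*x - 1/2*(a-b) \<le> (C+1)/4+1/2"
    for x a b :: real using [[linarith_trace]] by (simp add: field_simps)
  show ?thesis unfolding loss_def by (rule key[OF 1 2 3])
qed

lemma exp_loss_integrable:
  "integrable (measure_pmf (counts_pmf n R)) (\<lambda>k. loss (Ahat k) R Q)"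
proof -
  define B where "B = Max ((\<lambda>A. \<bar>loss A R Q\<bar>) ` UNIV)"
  have "\<bar>loss A R Q\<bar> \<le> B" for A unfolding B_def by (intro Max_ge) auto
  then show ?thesis
    by (intro measure_pmf.integrable_const_bound[where B=B]) auto
qed

lemma exp_loss_upper:
  fixes R Q :: "'a::finite \<Rightarrow> real"
  assumes "\<forall>i. 0 \<le> Q i" "(\<Sum>i\<in>UNIV. Q i) = 1" "\<forall>i. 0 \<le> R i" "(\<Sum>i\<in>UNIV. R i) \<le> C"
  shows "exp_loss n Q Ahat R \<le> (C + 1) / 4 + 1 / 2"
proof -
  have "exp_loss n Q Ahat R \<le> measure_pmf.expectation (counts_pmf n R) (\<lambda>k. (C + 1) / 4 + 1 / 2)"
    unfolding exp_loss_def
    by (intro integral_mono exp_loss_integrable loss_upper[OF assms]) auto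
  then show ?thesis by simp
qed

lemma exp_loss_Q: "exp_loss n Q Ahat Q = 0"
  unfolding exp_loss_def loss_def by simp

theorem lemma9:
  fixes Q :: "'a::finite \<Rightarrow> real" and n :: nat and eps C :: real
    and mu :: "('a \<Rightarrow> real) measure"
  assumes Q_nonneg: "\<forall>i. 0 \<le> Q i" and Q_sum: "(\<Sum>i\<in>UNIV. Q i) = 1"
    and eps_pos: "0 < eps"
    and mu_prob: "prob_space mu" and mu_sets: "sets mu = sets borel"
    and mu_nonneg: "AE R in mu. \<forall>i. 0 \<le> R i"
    and C_gt: "C > 1"
    and mu_bounded: "measure mu {P \<in> space mu. (\<Sum>i\<in>UNIV. P i) \<le> C} = 1"
  shows "R_P n Q eps \<ge> R_B n Q mu - ereal (C * measure mu (space mu - D0 eps))"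
proof -
  interpret prob_space mu by (rule mu_prob)
  have sp: "space mu = UNIV" using sets_eq_imp_space_eq[OF mu_sets] by simp
  have D0m: "D0 eps \<in> sets mu" using mu_sets D0_borel by auto
  have QD: "Q \<in> D0 eps" using Q_nonneg Q_sum eps_pos unfolding D0_def by auto
  have AEC: "AE R in mu. (\<Sum>i\<in>UNIV. R i) \<le> C"
    using AE_prob_1[OF mu_bounded] by auto
  define c where "c = C * measure mu (space mu - D0 eps)"
  have c0: "0 \<le> c" unfolding c_def using C_gt by simp
  have "R_B n Q mu - ereal c \<le> (SUP R\<in>D0 eps. ereal (exp_loss n Q Ahat R))" for Ahat
  proof -
    define f where "f = exp_loss n Q Ahat"
    define S where "S = (SUP R\<in>D0 eps. ereal (f R))"
    have S0: "0 \<le> S" unfolding S_def using SUP_upper[OF QD, of "\<lambda>R. ereal (f R)"]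
      by (simp add: f_def exp_loss_Q zero_ereal_def)
    have "R_B n Q mu - ereal c \<le> ereal (\<integral>R. f R \<partial>mu) - ereal c"
      unfolding R_B_def f_def by (intro ereal_minus_mono INF_lower) auto
    also have "\<dots> \<le> S"
    proof (cases "S = \<infinity>")
      case True then show ?thesis by simp
    next
      case False
      with S0 obtain s where s: "S = ereal s" by (cases S) auto
      have s0: "0 \<le> s" using S0 s by simp
      have fs: "f R \<le> s" if "R \<in> D0 eps" for R
      proof -
        have "ereal (f R) \<le> S" unfolding S_def using that by (rule SUP_upper)
        then show ?thesis using s by simp
      qed
      show ?thesis
      proof (cases "integrable mu f")
        case False
        then have "(\<integral>R. f R \<partial>mu) = 0" by (rule not_integrable_integral_eq)
        then show ?thesis using c0 s0 s by simp
      next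
        case True
        have "(\<integral>R. f R \<partial>mu) \<le> (\<integral>R. s * indicator (D0 eps) R + C * indicator (space mu - D0 eps) R \<partial>mu)"
        proof (rule integral_mono_AE[OF True])
          show "integrable mu (\<lambda>R. s * indicator (D0 eps) R + C * indicator (space mu - D0 eps) R)"
            using D0m by (intro Bochner_Integration.integrable_add integrable_mult_right integrable_real_indicator) (auto simp: less_top[symmetric] emeasure_finite)
          show "AE R in mu. f R \<le> s * indicator (D0 eps) R + C * indicator (space mu - D0 eps) R"
            using mu_nonneg AEC
          proof eventually_elim
            case (elim R)
            show ?case
            proof (cases "R \<in> D0 eps")
              case True then show ?thesis using fs by (simp add: sp)
            next
              case False
              have "f R \<le> (C + 1) / 4 + 1 / 2" unfolding f_def
                using exp_loss_upper[OF Q_nonneg Q_sum] elim by blast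
              then show ?thesis using False C_gt by (simp add: sp field_simps)
            qed
          qed
        qed
        also have "\<dots> = s * measure mu (D0 eps) + c"
          using D0m sets.compl_sets[OF D0m] by (subst Bochner_Integration.integral_add)
            (auto simp: c_def sp less_top[symmetric] emeasure_finite intro!: integrable_real_indicator)
        also have "\<dots> \<le> s + c"
          using s0 prob_le_1 by (simp add: mult_left_le)
        finally show ?thesis using s by simp
      qed
    qed
    finally show ?thesis unfolding S_def f_def .
  qed
  then show ?thesis unfolding R_P_def c_def by (intro INF_greatest) auto
qed

end
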